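(* Let $(X,d,\ll,\le,\tau)$ and $(Y,\widetilde d,\widetilde\ll,\widetilde\le,\widetilde\tau)$ be Lorentzian length spaces. If $(X,d,\ll,\le,\tau)$ is strongly causal, $(Y,\widetilde d)$ is locally compact, and $f:X\to Y$ is a surjective distance homothetic map, then $f$ is a homeomorphism (with respect to the metric topologies) and $(Y,\widetilde d,\widetilde\ll,\widetilde\le,\widetilde\tau)$ is strongly causal.
   Context: A causal space $(X,\ll,\le)$ is a set $X$ with two transitive relations $\ll,\le$ such that $\le$ is reflexive and $x\ll y\Rightarrow x\le y$; write $p<q$ if $p\le q$ and $p\neq q$. Set $I^+(x)=\{y: x\ll y\}$, $I^-(x)=\{y: y\ll x\}$, $J^+(x)=\{y:x\le y\}$, $J^-(x)=\{y:y\le x\}$. A Lorentzian pre-length space $(X,d,\ll,\le,\tau)$ is a causal space together with a metric $d$ on $X$ and a function $\tau:X\times X\to[0,\infty]$ that is lower semicontinuous with respect to the topology of $d$, satisfies $\tau(x,z)\ge\tau(x,y)+\tau(y,z)$ whenever $x\le y\le z$, $\tau(x,y)=0$ if $x\not\le y$, and $\tau(x,y)>0\iff x\ll y$. All topological notions refer to the metric topology of $d$. A future directed causal (resp. timelike) curve is a non-constant Lipschitz map $\gamma:I\to X$ ($I\subset\mathbb R$ an interval) with $\gamma(s)\le\gamma(t)$ (resp. $\gamma(s)\ll\gamma(t)$) for all $s<t$. For a future directed causal $\gamma:[a,b]\to X$, $L_\tau(\gamma)=\inf\sum_{i=0}^{N-1}\tau(\gamma(t_i),\gamma(t_{i+1}))$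 over all partitions $a=t_0<\dots<t_N=b$. The space is causally path connected if whenever $x\le y$ (resp. $x\ll y$) there is a future directed causal (resp. timelike) curve from $x$ to $y$. For open $U\subset X$, $p\le_U q$ means there is a future directed causal curve from $p$ to $q$ with image in $U$. A neighborhood $U$ is causally closed if whenever $p_n\le_U q_n$ with $p_n\to p\in U$, $q_n\to q\in U$, then $p\le_U q$; the space is locally causally closed if every point has a causally closed neighborhood. The space is localizable if every $x$ has a neighborhood $\Omega_x$ such that: (i) all causal curves contained in $\Omega_x$ have uniformly bounded $d$-length; (ii) there is a continuous $\omega_x:\Omega_x\times\Omega_x\to[0,\infty)$ such that $(\Omega_x,d|_{\Omega_x\times\Omega_x},\ll|_{\Omega_x},\le|_{\Omega_x},\omega_x)$ is a Lorentzian pre-length space, and $I^\pm(y)\cap\Omega_x\ne\emptyset$ for every $y\in\Omega_x$; (iii) for all $p,q\in\Omega_x$ with $p<q$ there is a future causal curve $\gamma_{p,q}$ from $p$ to $q$ with $L_\tau(\gamma_{p,q})\ge L_\tau(\gamma)$ for every future causal curve $\gamma\subset\Omega_x$ from $p$ to $q$, and $L_\tau(\gamma_{p,q})=\omega_x(p,q)$. A Lorentzian length space is a causally path connected, locally causally closed, localizable Lorentzian pre-length space with $\tau(x,y)=\sup\{L_\tau(\gamma):\gamma$ a future causal curve from $x$ to $y\}$. Strongly causal: the Alexandrov topology (subbase $\{I^+(x)\cap I^-(y)\}$) coincides with the metric topology. A map $f:X\to Y$ is distance homothetic if there is $c>0$ with $\widetilde\tau(f(p),f(q))=c\,\tau(p,q)$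 for all $p,q\in X$. *)

theory Defs
  imports "HOL-Analysis.Analysis"
begin

definition causal_space :: "'a set \<Rightarrow> ('a \<Rightarrow> 'a \<Rightarrow> bool) \<Rightarrow> ('a \<Rightarrow> 'a \<Rightarrow> bool) \<Rightarrow> bool" where
  "causal_space X ll le \<longleftrightarrow>
     (\<forall>x\<in>X. \<forall>y\<in>X. \<forall>z\<in>X. ll x y \<and> ll y z \<longrightarrow> ll x z) \<and>
     (\<forall>x\<in>X. \<forall>y\<in>X. \<forall>z\<in>X. le x y \<and> le y z \<longrightarrow> le x z) \<and>
     (\<forall>x\<in>X. le x x) \<and>
     (\<forall>x\<in>X. \<forall>y\<in>X. ll x y \<longrightarrow> le x y)"

definition lsc_on :: "'a set \<Rightarrow> ('a \<Rightarrow> 'a \<Rightarrow> real) \<Rightarrow> ('a \<Rightarrow> 'a \<Rightarrow> ennreal) \<Rightarrow> bool" where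
  "lsc_on X d t \<longleftrightarrow>
     (\<forall>p\<in>X. \<forall>q\<in>X. \<forall>c. c < t p q \<longrightarrow>
        (\<exists>e>0. \<forall>p'\<in>X. \<forall>q'\<in>X. d p p' < e \<and> d q q' < e \<longrightarrow> c < t p' q'))"

definition cont2_on :: "'a set \<Rightarrow> ('a \<Rightarrow> 'a \<Rightarrow> real) \<Rightarrow> ('a \<Rightarrow> 'a \<Rightarrow> real) \<Rightarrow> bool" where
  "cont2_on X d w \<longleftrightarrow>
     (\<forall>p\<in>X. \<forall>q\<in>X. \<forall>\<epsilon>>0. \<exists>\<delta>>0. \<forall>p'\<in>X. \<forall>q'\<in>X.
        d p p' < \<delta> \<and> d q q' < \<delta> \<longrightarrow> \<bar>w p' q' - w p q\<bar> < \<epsilon>)"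

definition lorentzian_pre_length_space ::
  "'a set \<Rightarrow> ('a \<Rightarrow> 'a \<Rightarrow> real) \<Rightarrow> ('a \<Rightarrow> 'a \<Rightarrow> bool) \<Rightarrow> ('a \<Rightarrow> 'a \<Rightarrow> bool) \<Rightarrow> ('a \<Rightarrow> 'a \<Rightarrow> ennreal) \<Rightarrow> bool" where
  "lorentzian_pre_length_space X d ll le t \<longleftrightarrow>
     Metric_space X d \<and> causal_space X ll le \<and> lsc_on X d t \<and>
     (\<forall>x\<in>X. \<forall>y\<in>X. \<forall>z\<in>X. le x y \<and> le y z \<longrightarrow> t x y + t y z \<le> t x z) \<and>
     (\<forall>x\<in>X. \<forall>y\<in>X. \<not> le x y \<longrightarrow> t x y = 0) \<and>
     (\<forall>x\<in>X. \<forall>y\<in>X. t x y > 0 \<longleftrightarrow> ll x y)"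

definition lipschitz_curve :: "'a set \<Rightarrow> ('a \<Rightarrow> 'a \<Rightarrow> real) \<Rightarrow> (real \<Rightarrow> 'a) \<Rightarrow> real set \<Rightarrow> bool" where
  "lipschitz_curve X d \<gamma> I \<longleftrightarrow>
     is_interval I \<and> \<gamma> ` I \<subseteq> X \<and>
     (\<exists>L. \<forall>s\<in>I. \<forall>t\<in>I. d (\<gamma> s) (\<gamma> t) \<le> L * \<bar>s - t\<bar>) \<and>
     (\<exists>s\<in>I. \<exists>t\<in>I. \<gamma> s \<noteq> \<gamma> t)"

definition fd_causal_curve ::
  "'a set \<Rightarrow> ('a \<Rightarrow> 'a \<Rightarrow> real) \<Rightarrow> ('a \<Rightarrow> 'a \<Rightarrow> bool) \<Rightarrow> (real \<Rightarrow> 'a) \<Rightarrow> real set \<Rightarrow> bool" where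
  "fd_causal_curve X d le \<gamma> I \<longleftrightarrow>
     lipschitz_curve X d \<gamma> I \<and> (\<forall>s\<in>I. \<forall>t\<in>I. s < t \<longrightarrow> le (\<gamma> s) (\<gamma> t))"

definition fd_timelike_curve ::
  "'a set \<Rightarrow> ('a \<Rightarrow> 'a \<Rightarrow> real) \<Rightarrow> ('a \<Rightarrow> 'a \<Rightarrow> bool) \<Rightarrow> (real \<Rightarrow> 'a) \<Rightarrow> real set \<Rightarrow> bool" where
  "fd_timelike_curve X d ll \<gamma> I \<longleftrightarrow>
     lipschitz_curve X d \<gamma> I \<and> (\<forall>s\<in>I. \<forall>t\<in>I. s < t \<longrightarrow> ll (\<gamma> s) (\<gamma> t))"

definition causal_curve_from ::
  "'a set \<Rightarrow> ('a \<Rightarrow> 'a \<Rightarrow> real) \<Rightarrow> ('a \<Rightarrow> 'a \<Rightarrow> bool) \<Rightarrow> (real \<Rightarrow> 'a) \<Rightarrow> real \<Rightarrow> real \<Rightarrow> 'a \<Rightarrow> 'a \<Rightarrow> bool" where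
  "causal_curve_from X d le \<gamma> a b x y \<longleftrightarrow>
     a < b \<and> fd_causal_curve X d le \<gamma> {a..b} \<and> \<gamma> a = x \<and> \<gamma> b = y"

definition timelike_curve_from ::
  "'a set \<Rightarrow> ('a \<Rightarrow> 'a \<Rightarrow> real) \<Rightarrow> ('a \<Rightarrow> 'a \<Rightarrow> bool) \<Rightarrow> (real \<Rightarrow> 'a) \<Rightarrow> real \<Rightarrow> real \<Rightarrow> 'a \<Rightarrow> 'a \<Rightarrow> bool" where
  "timelike_curve_from X d ll \<gamma> a b x y \<longleftrightarrow>
     a < b \<and> fd_timelike_curve X d ll \<gamma> {a..b} \<and> \<gamma> a = x \<and> \<gamma> b = y"

definition partitions :: "real \<Rightarrow> real \<Rightarrow> (nat \<times> (nat \<Rightarrow> real)) set" where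
  "partitions a b = {(N, s). 0 < N \<and> s 0 = a \<and> s N = b \<and> (\<forall>i<N. s i < s (Suc i))}"

definition tau_length :: "('a \<Rightarrow> 'a \<Rightarrow> ennreal) \<Rightarrow> (real \<Rightarrow> 'a) \<Rightarrow> real \<Rightarrow> real \<Rightarrow> ennreal" where
  "tau_length t \<gamma> a b =
     (INF (N, s)\<in>partitions a b. \<Sum>i<N. t (\<gamma> (s i)) (\<gamma> (s (Suc i))))"

definition d_length :: "('a \<Rightarrow> 'a \<Rightarrow> real) \<Rightarrow> (real \<Rightarrow> 'a) \<Rightarrow> real set \<Rightarrow> ennreal" where
  "d_length d \<gamma> I =
     (SUP (N, s)\<in>{(N, s). (\<forall>i\<le>N. s i \<in> I) \<and> (\<forall>i<N. s i < s (Suc i))}.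
        \<Sum>i<N. ennreal (d (\<gamma> (s i)) (\<gamma> (s (Suc i)))))"

definition causally_path_connected ::
  "'a set \<Rightarrow> ('a \<Rightarrow> 'a \<Rightarrow> real) \<Rightarrow> ('a \<Rightarrow> 'a \<Rightarrow> bool) \<Rightarrow> ('a \<Rightarrow> 'a \<Rightarrow> bool) \<Rightarrow> bool" where
  "causally_path_connected X d ll le \<longleftrightarrow>
     (\<forall>x\<in>X. \<forall>y\<in>X. le x y \<and> x \<noteq> y \<longrightarrow> (\<exists>\<gamma> a b. causal_curve_from X d le \<gamma> a b x y)) \<and>
     (\<forall>x\<in>X. \<forall>y\<in>X. ll x y \<longrightarrow> (\<exists>\<gamma> a b. timelike_curve_from X d ll \<gamma> a b x y))"

definition le_in ::
  "'a set \<Rightarrow> ('a \<Rightarrow> 'a \<Rightarrow> real) \<Rightarrow> ('a \<Rightarrow> 'a \<Rightarrow> bool) \<Rightarrow> 'a set \<Rightarrow> 'a \<Rightarrow> 'a \<Rightarrow> bool" where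
  "le_in X d le U p q \<longleftrightarrow>
     p = q \<or> (\<exists>\<gamma> a b. causal_curve_from X d le \<gamma> a b p q \<and> \<gamma> ` {a..b} \<subseteq> U)"

definition causally_closed ::
  "'a set \<Rightarrow> ('a \<Rightarrow> 'a \<Rightarrow> real) \<Rightarrow> ('a \<Rightarrow> 'a \<Rightarrow> bool) \<Rightarrow> 'a set \<Rightarrow> bool" where
  "causally_closed X d le U \<longleftrightarrow>
     openin (Metric_space.mtopology X d) U \<and>
     (\<forall>pn qn p q. (\<forall>n. le_in X d le U (pn n) (qn n)) \<and> p \<in> U \<and> q \<in> U \<and>
        (\<lambda>n. d (pn n) p) \<longlonglongrightarrow> 0 \<and> (\<lambda>n. d (qn n) q) \<longlonglongrightarrow> 0 \<longrightarrow> le_in X d le U p q)"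

definition locally_causally_closed ::
  "'a set \<Rightarrow> ('a \<Rightarrow> 'a \<Rightarrow> real) \<Rightarrow> ('a \<Rightarrow> 'a \<Rightarrow> bool) \<Rightarrow> bool" where
  "locally_causally_closed X d le \<longleftrightarrow> (\<forall>x\<in>X. \<exists>U. x \<in> U \<and> causally_closed X d le U)"

definition is_nbhd :: "'a set \<Rightarrow> ('a \<Rightarrow> 'a \<Rightarrow> real) \<Rightarrow> 'a \<Rightarrow> 'a set \<Rightarrow> bool" where
  "is_nbhd X d x N \<longleftrightarrow> N \<subseteq> X \<and> (\<exists>V. openin (Metric_space.mtopology X d) V \<and> x \<in> V \<and> V \<subseteq> N)"

definition localizable ::
  "'a set \<Rightarrow> ('a \<Rightarrow> 'a \<Rightarrow> real) \<Rightarrow> ('a \<Rightarrow> 'a \<Rightarrow> bool) \<Rightarrow> ('a \<Rightarrow> 'a \<Rightarrow> bool) \<Rightarrow> ('a \<Rightarrow> 'a \<Rightarrow> ennreal) \<Rightarrow> bool" where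
  "localizable X d ll le t \<longleftrightarrow>
     (\<forall>x\<in>X. \<exists>\<Omega> (\<omega> :: 'a \<Rightarrow> 'a \<Rightarrow> real). is_nbhd X d x \<Omega> \<and>
        \<comment> \<open>(i)\<close>
        (\<exists>C::real. \<forall>\<gamma> I. fd_causal_curve X d le \<gamma> I \<and> \<gamma> ` I \<subseteq> \<Omega> \<longrightarrow> d_length d \<gamma> I \<le> ennreal C) \<and>
        \<comment> \<open>(ii)\<close>
        (\<forall>p\<in>\<Omega>. \<forall>q\<in>\<Omega>. 0 \<le> \<omega> p q) \<and> cont2_on \<Omega> d \<omega> \<and>
        lorentzian_pre_length_space \<Omega> d ll le (\<lambda>p q. ennreal (\<omega> p q)) \<and>
        (\<forall>y\<in>\<Omega>. (\<exists>z\<in>\<Omega>. ll y z) \<and> (\<exists>z\<in>\<Omega>. ll z y)) \<and>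
        \<comment> \<open>(iii)\<close>
        (\<forall>p\<in>\<Omega>. \<forall>q\<in>\<Omega>. le p q \<and> p \<noteq> q \<longrightarrow>
           (\<exists>\<gamma> a b. causal_curve_from X d le \<gamma> a b p q \<and>
              tau_length t \<gamma> a b = ennreal (\<omega> p q) \<and>
              (\<forall>\<gamma>' a' b'. causal_curve_from X d le \<gamma>' a' b' p q \<and> \<gamma>' ` {a'..b'} \<subseteq> \<Omega> \<longrightarrow>
                 tau_length t \<gamma>' a' b' \<le> tau_length t \<gamma> a b))))"

definition lorentzian_length_space ::
  "'a set \<Rightarrow> ('a \<Rightarrow> 'a \<Rightarrow> real) \<Rightarrow> ('a \<Rightarrow> 'a \<Rightarrow> bool) \<Rightarrow> ('a \<Rightarrow> 'a \<Rightarrow> bool) \<Rightarrow> ('a \<Rightarrow> 'a \<Rightarrow> ennreal) \<Rightarrow> bool" where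
  "lorentzian_length_space X d ll le t \<longleftrightarrow>
     lorentzian_pre_length_space X d ll le t \<and>
     causally_path_connected X d ll le \<and>
     locally_causally_closed X d le \<and>
     localizable X d ll le t \<and>
     (\<forall>x\<in>X. \<forall>y\<in>X. t x y =
        (SUP (\<gamma>, a, b)\<in>{(\<gamma>, a, b). causal_curve_from X d le \<gamma> a b x y}. tau_length t \<gamma> a b))"

text \<open>Alexandrov topology on X: generated by the subbase {I^+(x) \<inter> I^-(y)} (together with
 X itself, the empty finite intersection).\<close>
definition alexandrov_topology :: "'a set \<Rightarrow> ('a \<Rightarrow> 'a \<Rightarrow> bool) \<Rightarrow> 'a topology" where
  "alexandrov_topology X ll =
     topology_generated_by (insert X {{z\<in>X. ll x z} \<inter> {z\<in>X. ll z y} | x y. x \<in> X \<and> y \<in> X})"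

definition strongly_causal :: "'a set \<Rightarrow> ('a \<Rightarrow> 'a \<Rightarrow> real) \<Rightarrow> ('a \<Rightarrow> 'a \<Rightarrow> bool) \<Rightarrow> bool" where
  "strongly_causal X d ll \<longleftrightarrow> alexandrov_topology X ll = Metric_space.mtopology X d"

definition distance_homothetic ::
  "'a set \<Rightarrow> ('a \<Rightarrow> 'a \<Rightarrow> ennreal) \<Rightarrow> ('b \<Rightarrow> 'b \<Rightarrow> ennreal) \<Rightarrow> ('a \<Rightarrow> 'b) \<Rightarrow> bool" where
  "distance_homothetic X t t' f \<longleftrightarrow>
     (\<exists>c::real. c > 0 \<and> (\<forall>p\<in>X. \<forall>q\<in>X. t' (f p) (f q) = ennreal c * t p q))"

end

theory Submission
  imports Defs
begin


lemma gen_subset: "generate_topology_on S U \<Longrightarrow> U \<subseteq> \<Union>S"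
  by (induction rule: generate_topology_on.induct) auto

lemma gen_open_in:
  assumes "generate_topology_on S U" "\<And>s. s \<in> S \<Longrightarrow> openin T s"
  shows "openin T U"
  using generate_topology_on_coarsest[of "openin T" S U] assms istopology_openin by blast

lemma gen_image:
  assumes "generate_topology_on S U" "inj_on f (\<Union>S)"
    "\<And>s. s \<in> S \<Longrightarrow> generate_topology_on S' (f ` s)"
  shows "generate_topology_on S' (f ` U)"
  using assms(1)
proof (induction rule: generate_topology_on.induct)
  case Empty
  then show ?case by (simp add: generate_topology_on.Empty)
next
  case (Int a b)
  have "f ` (a \<inter> b) = f ` a \<inter> f ` b"
    using inj_on_image_Int[OF assms(2)] gen_subset[OF Int.hyps(1)] gen_subset[OF Int.hyps(2)] by blast
  then show ?case using Int.IH generate_topology_on.Int by metis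
next
  case (UN K)
  have "f ` \<Union>K = \<Union>((`) f ` K)" by blast
  moreover have "generate_topology_on S' (\<Union>((`) f ` K))"
    by (rule generate_topology_on.UN) (use UN.IH in blast)
  ultimately show ?case by simp
next
  case (Basis s)
  then show ?case using assms(3) by blast
qed

lemma gen_preimage:
  assumes "generate_topology_on S' V"
    "\<And>s. s \<in> S' \<Longrightarrow> generate_topology_on S (f -` s \<inter> A)"
  shows "generate_topology_on S (f -` V \<inter> A)"
  using assms(1)
proof (induction rule: generate_topology_on.induct)
  case Empty
  then show ?case by (simp add: generate_topology_on.Empty)
next
  case (Int a b)
  have "f -` (a \<inter> b) \<inter> A = (f -` a \<inter> A) \<inter> (f -` b \<inter> A)" by blast
  then show ?case using Int.IH generate_topology_on.Int by metis
next
  case (UN K)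
  have "f -` \<Union>K \<inter> A = \<Union>((\<lambda>k. f -` k \<inter> A) ` K)" by blast
  moreover have "generate_topology_on S (\<Union>((\<lambda>k. f -` k \<inter> A) ` K))"
    by (rule generate_topology_on.UN) (use UN.IH in blast)
  ultimately show ?case by simp
next
  case (Basis s)
  then show ?case using assms(2) by blast
qed

lemma gen_same:
  assumes "generate_topology_on S U" "\<And>s. s \<in> S \<Longrightarrow> (p \<in> s \<longleftrightarrow> q \<in> s)"
  shows "p \<in> U \<longleftrightarrow> q \<in> U"
  using assms(1)
  by (induction rule: generate_topology_on.induct) (use assms(2) in auto)

definition dgood :: "'a topology \<Rightarrow> 'a set \<Rightarrow> ('a \<Rightarrow> 'a \<Rightarrow> bool) \<Rightarrow> 'a set \<Rightarrow> 'a \<Rightarrow> bool" where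
  "dgood T X ll U x \<longleftrightarrow> (\<exists>Wm Wp. openin T Wm \<and> openin T Wp \<and> x \<in> Wm \<and> x \<in> Wp \<and>
           (\<forall>a\<in>Wm. \<forall>b\<in>Wp. {z\<in>X. ll a z \<and> ll z b} \<subseteq> U))"

lemma dgood_mono: "dgood T X ll U x \<Longrightarrow> U \<subseteq> V \<Longrightarrow> dgood T X ll V x"
  unfolding dgood_def
  apply (elim exE conjE)
  subgoal for Wm Wp
    apply (rule exI[of _ Wm], rule exI[of _ Wp])
    apply (intro conjI)
        apply assumption+
    apply (meson order_trans)
    done
  done

lemma dgood_Int:
  assumes A: "dgood T X ll U x" and B: "dgood T X ll V x"
  shows "dgood T X ll (U \<inter> V) x"
proof -
  obtain Wm1 Wp1 where 1: "openin T Wm1" "openin T Wp1" "x \<in> Wm1" "x \<in> Wp1"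
     "\<forall>a'\<in>Wm1. \<forall>b'\<in>Wp1. {z\<in>X. ll a' z \<and> ll z b'} \<subseteq> U"
    using A unfolding dgood_def by (elim exE conjE) (rule that)
  obtain Wm2 Wp2 where 2: "openin T Wm2" "openin T Wp2" "x \<in> Wm2" "x \<in> Wp2"
     "\<forall>a'\<in>Wm2. \<forall>b'\<in>Wp2. {z\<in>X. ll a' z \<and> ll z b'} \<subseteq> V"
    using B unfolding dgood_def by (elim exE conjE) (rule that)
  have o: "openin T (Wm1 \<inter> Wm2)" "openin T (Wp1 \<inter> Wp2)" using 1 2 by auto
  have i: "x \<in> Wm1 \<inter> Wm2" "x \<in> Wp1 \<inter> Wp2" using 1 2 by auto
  have s: "\<forall>a'\<in>Wm1 \<inter> Wm2. \<forall>b'\<in>Wp1 \<inter> Wp2. {z\<in>X. ll a' z \<and> ll z b'} \<subseteq> U \<inter> V"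
  proof (intro ballI)
    fix a' b' assume a: "a' \<in> Wm1 \<inter> Wm2" and b: "b' \<in> Wp1 \<inter> Wp2"
    have "{z\<in>X. ll a' z \<and> ll z b'} \<subseteq> U" using 1(5) a b by simp
    moreover have "{z\<in>X. ll a' z \<and> ll z b'} \<subseteq> V" using 2(5) a b by simp
    ultimately show "{z\<in>X. ll a' z \<and> ll z b'} \<subseteq> U \<inter> V" by (rule Int_greatest)
  qed
  show ?thesis unfolding dgood_def
    by (rule exI[of _ "Wm1 \<inter> Wm2"], rule exI[of _ "Wp1 \<inter> Wp2"]) (use o i s in simp)
qed

lemma gen_diamond:
  assumes "generate_topology_on S U" and "x \<in> U"
    and "\<And>s x. s \<in> S \<Longrightarrow> x \<in> s \<Longrightarrow> dgood T X ll s x"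
  shows "dgood T X ll U x"
  using assms(1,2)
proof (induction arbitrary: x rule: generate_topology_on.induct)
  case Empty
  then show ?case by simp
next
  case (Int a b)
  then show ?case using dgood_Int[OF Int.IH(1)[of x] Int.IH(2)[of x]] by simp
next
  case (UN K)
  then obtain k where "k \<in> K" "x \<in> k" by blast
  then show ?case using UN.IH[of k x] dgood_mono[of T X ll k x "\<Union>K"] by (meson Union_upper)
next
  case (Basis s)
  then show ?case using assms(3) by simp
qed

lemma lsc_open:
  assumes "lsc_on Y d t" "\<forall>x\<in>Y. \<forall>y\<in>Y. t x y > 0 \<longleftrightarrow> ll x y" "Metric_space Y d" "a \<in> Y"
  shows "openin (Metric_space.mtopology Y d) {z\<in>Y. ll a z} \<and>
         openin (Metric_space.mtopology Y d) {z\<in>Y. ll z a}"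
proof -
  interpret M: Metric_space Y d by fact
  have A: "openin M.mtopology {z\<in>Y. ll a z}"
    unfolding M.openin_mtopology
  proof (intro conjI allI impI)
    fix z assume z: "z \<in> {z\<in>Y. ll a z}"
    then have "0 < t a z" using assms by auto
    then obtain e where e: "e > 0" "\<forall>p'\<in>Y. \<forall>q'\<in>Y. d a p' < e \<and> d z q' < e \<longrightarrow> 0 < t p' q'"
      using assms(1) z assms(4) unfolding lsc_on_def by blast
    have "M.mball z e \<subseteq> {z\<in>Y. ll a z}"
      using e assms(2,4) by auto
    then show "\<exists>r>0. M.mball z r \<subseteq> {z\<in>Y. ll a z}" using e by blast
  qed auto
  have B: "openin M.mtopology {z\<in>Y. ll z a}"
    unfolding M.openin_mtopology
  proof (intro conjI allI impI)
    fix z assume z: "z \<in> {z\<in>Y. ll z a}"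
    then have "0 < t z a" using assms by auto
    then obtain e where e: "e > 0" "\<forall>p'\<in>Y. \<forall>q'\<in>Y. d z p' < e \<and> d a q' < e \<longrightarrow> 0 < t p' q'"
      using assms(1) z assms(4) unfolding lsc_on_def by blast
    have "M.mball z e \<subseteq> {z\<in>Y. ll z a}"
      using e assms(2,4) by auto
    then show "\<exists>r>0. M.mball z r \<subseteq> {z\<in>Y. ll z a}" using e by blast
  qed auto
  show ?thesis using A B by blast
qed


lemma curve_near_end:
  assumes "timelike_curve_from Y d ll \<gamma> a b u v" "e > 0"
  shows "\<exists>t. a < t \<and> t < b \<and> d (\<gamma> b) (\<gamma> t) < e \<and> \<gamma> t \<in> Y \<and> ll (\<gamma> t) v"
proof -
  have ab: "a < b" and Y: "\<gamma> ` {a..b} \<subseteq> Y" and ord: "\<forall>s\<in>{a..b}. \<forall>t\<in>{a..b}. s < t \<longrightarrow> ll (\<gamma> s) (\<gamma> t)"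
    and v: "\<gamma> b = v"
    using assms(1) unfolding timelike_curve_from_def fd_timelike_curve_def lipschitz_curve_def by auto
  obtain L where L: "\<forall>s\<in>{a..b}. \<forall>t\<in>{a..b}. d (\<gamma> s) (\<gamma> t) \<le> L * \<bar>s - t\<bar>"
    using assms(1) unfolding timelike_curve_from_def fd_timelike_curve_def lipschitz_curve_def by auto
  define h where "h = min ((b - a) / 2) (e / (\<bar>L\<bar> + 1))"
  have h0: "0 < h" using ab assms(2) by (simp add: h_def)
  have h1: "h \<le> (b - a) / 2" "h \<le> e / (\<bar>L\<bar> + 1)" unfolding h_def by (rule min.cobounded1, rule min.cobounded2)
  define t where "t = b - h"
  have t: "a < t" "t < b" using h0 h1 ab by (auto simp: t_def)
  have "d (\<gamma> b) (\<gamma> t) \<le> L * \<bar>b - t\<bar>" using L t ab by (meson atLeastAtMost_iff less_imp_le order_refl)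
  also have "\<dots> \<le> \<bar>L\<bar> * h" using h0 by (simp add: t_def)
  also have "\<dots> < e"
  proof -
    have "\<bar>L\<bar> * h \<le> \<bar>L\<bar> * (e / (\<bar>L\<bar> + 1))" using h1(2) by (intro mult_left_mono) auto
    also have "\<dots> < e" using assms(2) by (simp add: field_simps)
    finally show ?thesis .
  qed
  finally have "d (\<gamma> b) (\<gamma> t) < e" .
  moreover have "\<gamma> t \<in> Y" using Y t by auto
  moreover have "ll (\<gamma> t) v" using ord t ab v by auto
  ultimately show ?thesis using t by blast
qed

lemma curve_near_start:
  assumes "timelike_curve_from Y d ll \<gamma> a b u v" "e > 0"
  shows "\<exists>t. a < t \<and> t < b \<and> d (\<gamma> a) (\<gamma> t) < e \<and> \<gamma> t \<in> Y \<and> ll u (\<gamma> t)"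
proof -
  have ab: "a < b" and Y: "\<gamma> ` {a..b} \<subseteq> Y" and ord: "\<forall>s\<in>{a..b}. \<forall>t\<in>{a..b}. s < t \<longrightarrow> ll (\<gamma> s) (\<gamma> t)"
    and u: "\<gamma> a = u"
    using assms(1) unfolding timelike_curve_from_def fd_timelike_curve_def lipschitz_curve_def by auto
  obtain L where L: "\<forall>s\<in>{a..b}. \<forall>t\<in>{a..b}. d (\<gamma> s) (\<gamma> t) \<le> L * \<bar>s - t\<bar>"
    using assms(1) unfolding timelike_curve_from_def fd_timelike_curve_def lipschitz_curve_def by auto
  define h where "h = min ((b - a) / 2) (e / (\<bar>L\<bar> + 1))"
  have h0: "0 < h" using ab assms(2) by (simp add: h_def)
  have h1: "h \<le> (b - a) / 2" "h \<le> e / (\<bar>L\<bar> + 1)" unfolding h_def by (rule min.cobounded1, rule min.cobounded2)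
  define t where "t = a + h"
  have t: "a < t" "t < b" using h0 h1 ab by (auto simp: t_def)
  have "d (\<gamma> a) (\<gamma> t) \<le> L * \<bar>a - t\<bar>" using L t ab by (meson atLeastAtMost_iff less_imp_le order_refl)
  also have "\<dots> \<le> \<bar>L\<bar> * h" using h0 by (simp add: t_def)
  also have "\<dots> < e"
  proof -
    have "\<bar>L\<bar> * h \<le> \<bar>L\<bar> * (e / (\<bar>L\<bar> + 1))" using h1(2) by (intro mult_left_mono) auto
    also have "\<dots> < e" using assms(2) by (simp add: field_simps)
    finally show ?thesis .
  qed
  finally have "d (\<gamma> a) (\<gamma> t) < e" .
  moreover have "\<gamma> t \<in> Y" using Y t by auto
  moreover have "ll u (\<gamma> t)" using ord t ab u by auto
  ultimately show ?thesis using t by blast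
qed

lemma near_past_future:
  assumes L: "lorentzian_length_space Y d ll le t" and y: "y \<in> Y" and e: "e > 0"
  shows "(\<exists>p\<in>Y. d y p < e \<and> ll p y) \<and> (\<exists>q\<in>Y. d y q < e \<and> ll y q)"
proof -
  have loc: "localizable Y d ll le t" and cpc: "causally_path_connected Y d ll le"
    using L unfolding lorentzian_length_space_def by auto
  obtain \<Omega> where O: "is_nbhd Y d y \<Omega>" "\<forall>y\<in>\<Omega>. (\<exists>z\<in>\<Omega>. ll y z) \<and> (\<exists>z\<in>\<Omega>. ll z y)"
    using loc y unfolding localizable_def by metis
  have "y \<in> \<Omega>" "\<Omega> \<subseteq> Y" using O(1) unfolding is_nbhd_def by auto
  then obtain z1 z2 where z: "z1 \<in> Y" "z2 \<in> Y" "ll z1 y" "ll y z2" using O(2) by blast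
  obtain \<gamma>1 a1 b1 where g1: "timelike_curve_from Y d ll \<gamma>1 a1 b1 z1 y"
    using cpc z y unfolding causally_path_connected_def by blast
  obtain \<gamma>2 a2 b2 where g2: "timelike_curve_from Y d ll \<gamma>2 a2 b2 y z2"
    using cpc z y unfolding causally_path_connected_def by blast
  have e1: "\<gamma>1 b1 = y" using g1 unfolding timelike_curve_from_def by auto
  have e2: "\<gamma>2 a2 = y" using g2 unfolding timelike_curve_from_def by auto
  show ?thesis
    using curve_near_end[OF g1 e] curve_near_start[OF g2 e] e1 e2 by metis
qed


theorem theorem4p4:
  fixes d :: "'a \<Rightarrow> 'a \<Rightarrow> real" and ll le :: "'a \<Rightarrow> 'a \<Rightarrow> bool" and \<tau> :: "'a \<Rightarrow> 'a \<Rightarrow> ennreal"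
    and d' :: "'b \<Rightarrow> 'b \<Rightarrow> real" and ll' le' :: "'b \<Rightarrow> 'b \<Rightarrow> bool" and \<tau>' :: "'b \<Rightarrow> 'b \<Rightarrow> ennreal"
    and X :: "'a set" and Y :: "'b set" and f :: "'a \<Rightarrow> 'b"
  assumes "lorentzian_length_space X d ll le \<tau>"
    and "lorentzian_length_space Y d' ll' le' \<tau>'"
    and "strongly_causal X d ll"
    and "locally_compact_space (Metric_space.mtopology Y d')"
    and "f ` X = Y"
    and "distance_homothetic X \<tau> \<tau>' f"
  shows "homeomorphic_map (Metric_space.mtopology X d) (Metric_space.mtopology Y d') f
         \<and> strongly_causal Y d' ll'"
proof -
  have LX: "lorentzian_pre_length_space X d ll le \<tau>"
    using assms(1) unfolding lorentzian_length_space_def by (elim conjE)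
  have LY: "lorentzian_pre_length_space Y d' ll' le' \<tau>'"
    using assms(2) unfolding lorentzian_length_space_def by (elim conjE)
  have cpcY: "causally_path_connected Y d' ll' le'"
    using assms(2) unfolding lorentzian_length_space_def by (elim conjE)
  have MXa: "Metric_space X d"
    using LX unfolding lorentzian_pre_length_space_def by (elim conjE)
  have posX: "\<forall>x\<in>X. \<forall>y\<in>X. (0 < \<tau> x y) = ll x y"
    using LX unfolding lorentzian_pre_length_space_def by (elim conjE)
  have lscX: "lsc_on X d \<tau>"
    using LX unfolding lorentzian_pre_length_space_def by (elim conjE)
  have csX: "causal_space X ll le"
    using LX unfolding lorentzian_pre_length_space_def by (elim conjE)
  have MYa: "Metric_space Y d'"
    using LY unfolding lorentzian_pre_length_space_def by (elim conjE)
  have posY: "\<forall>x\<in>Y. \<forall>y\<in>Y. (0 < \<tau>' x y) = ll' x y"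
    using LY unfolding lorentzian_pre_length_space_def by (elim conjE)
  have lscY: "lsc_on Y d' \<tau>'"
    using LY unfolding lorentzian_pre_length_space_def by (elim conjE)
  have csY: "causal_space Y ll' le'"
    using LY unfolding lorentzian_pre_length_space_def by (elim conjE)
  have transX: "\<forall>x\<in>X. \<forall>y\<in>X. \<forall>z\<in>X. ll x y \<and> ll y z \<longrightarrow> ll x z"
    using csX unfolding causal_space_def by (elim conjE)
  have transY: "\<forall>x\<in>Y. \<forall>y\<in>Y. \<forall>z\<in>Y. ll' x y \<and> ll' y z \<longrightarrow> ll' x z"
    using csY unfolding causal_space_def by (elim conjE)
  have trX: "ll x z" if "x \<in> X" "y \<in> X" "z \<in> X" "ll x y" "ll y z" for x y z
    using transX that by blast
  have trY: "ll' x z" if "x \<in> Y" "y \<in> Y" "z \<in> Y" "ll' x y" "ll' y z" for x y z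
    using transY that by blast
  interpret MX: Metric_space X d by (rule MXa)
  interpret MY: Metric_space Y d' by (rule MYa)
  obtain c :: real where c: "c > 0" "\<forall>p\<in>X. \<forall>q\<in>X. \<tau>' (f p) (f q) = ennreal c * \<tau> p q"
    using assms(6) unfolding distance_homothetic_def by auto
  have fY: "\<And>x. x \<in> X \<Longrightarrow> f x \<in> Y" using assms(5) by auto
  have llf: "ll' (f p) (f q) \<longleftrightarrow> ll p q" if "p \<in> X" "q \<in> X" for p q
  proof -
    have "ll' (f p) (f q) \<longleftrightarrow> 0 < \<tau>' (f p) (f q)" using posY fY that by auto
    also have "\<dots> \<longleftrightarrow> 0 < ennreal c * \<tau> p q" using c that by auto
    also have "\<dots> \<longleftrightarrow> 0 < \<tau> p q" using c(1) by (simp add: zero_less_iff_neq_zero)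
    also have "\<dots> \<longleftrightarrow> ll p q" using posX that by auto
    finally show ?thesis .
  qed
  define SX where "SX = insert X {{z\<in>X. ll a z} \<inter> {z\<in>X. ll z b} | a b. a \<in> X \<and> b \<in> X}"
  define SY where "SY = insert Y {{z\<in>Y. ll' a z} \<inter> {z\<in>Y. ll' z b} | a b. a \<in> Y \<and> b \<in> Y}"
  have genX: "generate_topology_on SX U \<longleftrightarrow> openin MX.mtopology U" for U
  proof -
    have AX: "alexandrov_topology X ll = topology_generated_by SX"
      unfolding alexandrov_topology_def SX_def by (rule refl)
    have E: "topology_generated_by SX = MX.mtopology"
      using assms(3) AX unfolding strongly_causal_def by simp
    have "generate_topology_on SX U \<longleftrightarrow> openin (topology_generated_by SX) U"
      by (rule openin_topology_generated_by_iff[symmetric])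
    also have "\<dots> \<longleftrightarrow> openin MX.mtopology U" by (simp only: E)
    finally show ?thesis .
  qed
  have SXcases: "s = X \<or> (\<exists>a b. a \<in> X \<and> b \<in> X \<and> s = {z\<in>X. ll a z} \<inter> {z\<in>X. ll z b})" if "s \<in> SX" for s
    using that unfolding SX_def by auto
  have SYcases: "s = Y \<or> (\<exists>a b. a \<in> Y \<and> b \<in> Y \<and> s = {z\<in>Y. ll' a z} \<inter> {z\<in>Y. ll' z b})" if "s \<in> SY" for s
    using that unfolding SY_def by auto
  have inj: "inj_on f X"
  proof (rule inj_onI)
    fix p q assume p: "p \<in> X" and q: "q \<in> X" and fpq: "f p = f q"
    show "p = q"
    proof (rule ccontr)
      assume ne: "p \<noteq> q"
      let ?U = "MX.mball p (d p q)"
      have "generate_topology_on SX ?U" using genX MX.openin_mball by blast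
      moreover have "p \<in> s \<longleftrightarrow> q \<in> s" if sS: "s \<in> SX" for s
      proof (cases "s = X")
        case True then show ?thesis using p q by simp
      next
        case False
        then obtain a b where ab: "a \<in> X" "b \<in> X" "s = {z\<in>X. ll a z} \<inter> {z\<in>X. ll z b}"
          using SXcases[OF sS] False by metis
        have "ll a p \<longleftrightarrow> ll a q" using llf[of a p] llf[of a q] ab p q fpq by auto
        moreover have "ll p b \<longleftrightarrow> ll q b" using llf[of p b] llf[of q b] ab p q fpq by auto
        ultimately show ?thesis using ab(3) p q by auto
      qed
      ultimately have "p \<in> ?U \<longleftrightarrow> q \<in> ?U" by (rule gen_same)
      moreover have "p \<in> ?U" using p q ne by simp
      moreover have "q \<notin> ?U" by simp
      ultimately show False by blast
    qed
  qed
  define g where "g = inv_into X f"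
  have gY: "\<And>y. y \<in> Y \<Longrightarrow> g y \<in> X \<and> f (g y) = y"
    unfolding g_def using assms(5) by (metis inv_into_into f_inv_into_f)
  have gf: "\<And>x. x \<in> X \<Longrightarrow> g (f x) = x"
    unfolding g_def using inj by (simp add: inv_into_f_f)
  have opnY: "\<And>a. a \<in> Y \<Longrightarrow> openin MY.mtopology {z\<in>Y. ll' a z} \<and> openin MY.mtopology {z\<in>Y. ll' z a}"
    using lsc_open[OF lscY posY MYa] by blast
  have opnX: "\<And>a. a \<in> X \<Longrightarrow> openin MX.mtopology {z\<in>X. ll a z} \<and> openin MX.mtopology {z\<in>X. ll z a}"
    using lsc_open[OF lscX posX MXa] by blast
  have AYsub: "openin MY.mtopology V" if "generate_topology_on SY V" for V
  proof (rule gen_open_in[OF that])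
    fix s assume s: "s \<in> SY"
    show "openin MY.mtopology s"
    proof (cases "s = Y")
      case True then show ?thesis using MY.topspace_mtopology openin_topspace by metis
    next
      case False
      then obtain a b where ab: "a \<in> Y" "b \<in> Y" "s = {z\<in>Y. ll' a z} \<inter> {z\<in>Y. ll' z b}"
        using SYcases[OF s] False by metis
      then show ?thesis using opnY[of a] opnY[of b] by (simp add: openin_Int)
    qed
  qed
  have unionSX: "\<Union>SX = X" unfolding SX_def by auto
  have imgX: "generate_topology_on SY (f ` U)" if "generate_topology_on SX U" for U
  proof (rule gen_image[OF that])
    show "inj_on f (\<Union>SX)" using inj unionSX by simp
  next
    fix s assume s: "s \<in> SX"
    show "generate_topology_on SY (f ` s)"
    proof (cases "s = X")
      case True then show ?thesis using assms(5) by (simp add: SY_def generate_topology_on.Basis)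
    next
      case False
      then obtain a b where ab: "a \<in> X" "b \<in> X" "s = {z\<in>X. ll a z} \<inter> {z\<in>X. ll z b}"
        using SXcases[OF s] False by metis
      have "f ` s = {z\<in>Y. ll' (f a) z} \<inter> {z\<in>Y. ll' z (f b)}"
      proof (intro equalityI subsetI)
        fix z assume "z \<in> f ` s"
        then obtain w where w: "w \<in> X" "ll a w" "ll w b" "z = f w" using ab(3) by auto
        then show "z \<in> {z\<in>Y. ll' (f a) z} \<inter> {z\<in>Y. ll' z (f b)}"
          using llf[of a w] llf[of w b] ab fY by auto
      next
        fix z assume z: "z \<in> {z\<in>Y. ll' (f a) z} \<inter> {z\<in>Y. ll' z (f b)}"
        then have "g z \<in> X" "f (g z) = z" using gY by auto
        then have "g z \<in> s" using z llf[of a "g z"] llf[of "g z" b] ab by auto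
        then show "z \<in> f ` s" using \<open>f (g z) = z\<close> by (metis imageI)
      qed
      moreover have "{z\<in>Y. ll' (f a) z} \<inter> {z\<in>Y. ll' z (f b)} \<in> SY"
        unfolding SY_def using fY ab by blast
      ultimately show ?thesis by (simp add: generate_topology_on.Basis)
    qed
  qed
  have preY: "generate_topology_on SX (f -` V \<inter> X)" if "generate_topology_on SY V" for V
  proof (rule gen_preimage[OF that])
    fix s assume s: "s \<in> SY"
    show "generate_topology_on SX (f -` s \<inter> X)"
    proof (cases "s = Y")
      case True
      then have "f -` s \<inter> X = X" using fY by auto
      then show ?thesis by (simp add: SX_def generate_topology_on.Basis)
    next
      case False
      then obtain a b where ab: "a \<in> Y" "b \<in> Y" "s = {z\<in>Y. ll' a z} \<inter> {z\<in>Y. ll' z b}"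
        using SYcases[OF s] False by metis
      have "f -` s \<inter> X = {z\<in>X. ll (g a) z} \<inter> {z\<in>X. ll z (g b)}"
      proof (intro equalityI subsetI)
        fix z assume z: "z \<in> f -` s \<inter> X"
        then show "z \<in> {z\<in>X. ll (g a) z} \<inter> {z\<in>X. ll z (g b)}"
          using llf[of "g a" z] llf[of z "g b"] gY[OF ab(1)] gY[OF ab(2)] ab(3) by auto
      next
        fix z assume z: "z \<in> {z\<in>X. ll (g a) z} \<inter> {z\<in>X. ll z (g b)}"
        then show "z \<in> f -` s \<inter> X"
          using llf[of "g a" z] llf[of z "g b"] gY[OF ab(1)] gY[OF ab(2)] ab(3) fY by auto
      qed
      moreover have "{z\<in>X. ll (g a) z} \<inter> {z\<in>X. ll z (g b)} \<in> SX"
        unfolding SX_def using gY ab by blast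
      ultimately show ?thesis by (simp add: generate_topology_on.Basis)
    qed
  qed
  have gcont: "continuous_map MY.mtopology MX.mtopology g"
    unfolding continuous_map_def
  proof (intro conjI allI impI)
    show "g \<in> topspace MY.mtopology \<rightarrow> topspace MX.mtopology" using gY by auto
  next
    fix W assume W: "openin MX.mtopology W"
    then have WX: "W \<subseteq> X" using openin_subset by fastforce
    have eq: "{y \<in> topspace MY.mtopology. g y \<in> W} = f ` W"
    proof (intro equalityI subsetI)
      fix y assume "y \<in> {y \<in> topspace MY.mtopology. g y \<in> W}"
      then have "y \<in> Y" "g y \<in> W" by auto
      then show "y \<in> f ` W" using gY by (metis imageI)
    next
      fix y assume "y \<in> f ` W"
      then obtain w where "w \<in> W" "y = f w" by auto
      then show "y \<in> {y \<in> topspace MY.mtopology. g y \<in> W}" using WX gf fY by auto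
    qed
    show "openin MY.mtopology {y \<in> topspace MY.mtopology. g y \<in> W}"
      unfolding eq using AYsub imgX genX W by blast
  qed
  have TYsub: "generate_topology_on SY V" if V: "openin MY.mtopology V" for V
  proof -
    have "openin (topology_generated_by SY) V"
    proof (subst openin_subopen, intro ballI)
      fix y assume yV: "y \<in> V"
      have y: "y \<in> Y" using V yV openin_subset by fastforce
      define x where "x = g y"
      have x: "x \<in> X" "f x = y" using gY[OF y] by (auto simp: x_def)
      obtain U0 K where UK: "openin MY.mtopology U0" "compactin MY.mtopology K" "y \<in> U0" "U0 \<subseteq> K"
        using assms(4) y unfolding locally_compact_space_def by auto
      obtain r1 where r1: "r1 > 0" "MY.mball y r1 \<subseteq> V" using V yV MY.openin_mtopology by metis
      obtain r2 where r2: "r2 > 0" "MY.mball y r2 \<subseteq> U0" using UK(1,3) MY.openin_mtopology by metis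
      define \<rho> where "\<rho> = min r1 r2 / 2"
      have \<rho>: "0 < \<rho>" "\<rho> < r1" "\<rho> < r2" using r1 r2 by (auto simp: \<rho>_def)
      define S where "S = MY.mcball y \<rho> - MY.mball y \<rho>"
      have SK: "S \<subseteq> K" using MY.mcball_subset_mball_concentric[OF \<rho>(3), of y] r2 UK(4)
        unfolding S_def by blast
      have Scl: "closedin MY.mtopology S" unfolding S_def
        by (rule closedin_diff) auto
      have Scp: "compactin MY.mtopology S" by (rule closed_compactin[OF UK(2) SK Scl])
      have gScp: "compactin MX.mtopology (g ` S)" by (rule image_compactin[OF Scp gcont])
      have gScl: "closedin MX.mtopology (g ` S)"
        by (rule compactin_imp_closedin[OF MX.Hausdorff_space_mtopology gScp])
      define U where "U = X - g ` S"
      have Uop: "openin MX.mtopology U" unfolding U_def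
        using openin_diff[OF openin_topspace gScl] by simp
      have SY: "S \<subseteq> Y" unfolding S_def by auto
      have xU: "x \<in> U"
      proof -
        have "x \<notin> g ` S"
        proof
          assume "x \<in> g ` S"
          then obtain w where w: "w \<in> S" "x = g w" by auto
          then have "w = y" using gY[of w] SY x by auto
          then show False using w(1) y \<rho>(1) unfolding S_def by auto
        qed
        then show ?thesis using x unfolding U_def by auto
      qed
      have basis: "dgood MX.mtopology X ll s z" if sS: "s \<in> SX" and zs: "z \<in> s" for s z
      proof (cases "s = X")
        case True
        show ?thesis unfolding dgood_def
          apply (rule exI[of _ X], rule exI[of _ X])
          using True zs MX.topspace_mtopology openin_topspace by (metis Collect_subset inf.coboundedI1)
      next
        case False
        then obtain a b where ab: "a \<in> X" "b \<in> X" "s = {z\<in>X. ll a z} \<inter> {z\<in>X. ll z b}"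
          using SXcases[OF sS] False by metis
        have sub: "{w\<in>X. ll a' w \<and> ll w b'} \<subseteq> s" if "a' \<in> {w\<in>X. ll a w}" "b' \<in> {w\<in>X. ll w b}" for a' b'
        proof
          fix w assume w: "w \<in> {w\<in>X. ll a' w \<and> ll w b'}"
          have a'X: "a' \<in> X" "ll a a'" and b'X: "b' \<in> X" "ll b' b" using that by auto
          have wX: "w \<in> X" "ll a' w" "ll w b'" using w by auto
          have "ll a w" using trX[OF ab(1) a'X(1) wX(1) a'X(2) wX(2)] .
          moreover have "ll w b" using trX[OF wX(1) b'X(1) ab(2) wX(3) b'X(2)] .
          ultimately show "w \<in> s" using ab(3) w by auto
        qed
        show ?thesis unfolding dgood_def
          apply (rule exI[of _ "{w\<in>X. ll a w}"], rule exI[of _ "{w\<in>X. ll w b}"])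
          using opnX[OF ab(1)] opnX[OF ab(2)] zs ab(3) sub by auto
      qed
      have "dgood MX.mtopology X ll U x"
        by (rule gen_diamond[where S=SX]) (use genX Uop xU basis in auto)
      then obtain Wm Wp where W: "openin MX.mtopology Wm" "openin MX.mtopology Wp" "x \<in> Wm" "x \<in> Wp"
        "\<forall>a\<in>Wm. \<forall>b\<in>Wp. {z\<in>X. ll a z \<and> ll z b} \<subseteq> U"
        unfolding dgood_def by (elim exE conjE) (rule that)
      define N1 where "N1 = {w \<in> topspace MY.mtopology. g w \<in> Wm} \<inter> MY.mball y \<rho>"
      define N2 where "N2 = {w \<in> topspace MY.mtopology. g w \<in> Wp} \<inter> MY.mball y \<rho>"
      have N1: "openin MY.mtopology N1" unfolding N1_def
        using openin_continuous_map_preimage[OF gcont W(1)] by (simp add: openin_Int)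
      have N2: "openin MY.mtopology N2" unfolding N2_def
        using openin_continuous_map_preimage[OF gcont W(2)] by (simp add: openin_Int)
      have yN: "y \<in> N1" "y \<in> N2" using y W(3,4) \<rho>(1) x unfolding N1_def N2_def x_def by auto
      obtain e1 where e1: "e1 > 0" "MY.mball y e1 \<subseteq> N1" using N1 yN(1) MY.openin_mtopology by metis
      obtain e2 where e2: "e2 > 0" "MY.mball y e2 \<subseteq> N2" using N2 yN(2) MY.openin_mtopology by metis
      obtain p where p: "p \<in> Y" "d' y p < e1" "ll' p y"
        using near_past_future[OF assms(2) y e1(1)] by blast
      obtain q where q: "q \<in> Y" "d' y q < e2" "ll' y q"
        using near_past_future[OF assms(2) y e2(1)] by blast
      have pN: "p \<in> N1" using p e1 y by auto
      have qN: "q \<in> N2" using q e2 y by auto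
      have gp: "g p \<in> Wm" "d' y p < \<rho>" using pN unfolding N1_def by auto
      have gq: "g q \<in> Wp" "d' y q < \<rho>" using qN unfolding N2_def by auto
      define D where "D = {z\<in>Y. ll' p z} \<inter> {z\<in>Y. ll' z q}"
      have Dop: "openin (topology_generated_by SY) D"
        by (rule topology_generated_by_Basis) (unfold SY_def D_def, use p q in blast)
      have yD: "y \<in> D" using y p q unfolding D_def by auto
      have DV: "D \<subseteq> V"
      proof
        fix z assume zD: "z \<in> D"
        then have z: "z \<in> Y" "ll' p z" "ll' z q" unfolding D_def by auto
        have "d' y z < \<rho>"
        proof (rule ccontr)
          assume "\<not> d' y z < \<rho>"
          then have zr: "\<rho> \<le> d' y z" by simp
          obtain \<gamma> a0 b0 where gam: "timelike_curve_from Y d' ll' \<gamma> a0 b0 p z"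
            using cpcY p z unfolding causally_path_connected_def by blast
          have ab: "a0 < b0" and gY': "\<gamma> ` {a0..b0} \<subseteq> Y"
            and ord: "\<forall>s\<in>{a0..b0}. \<forall>t\<in>{a0..b0}. s < t \<longrightarrow> ll' (\<gamma> s) (\<gamma> t)"
            and ends: "\<gamma> a0 = p" "\<gamma> b0 = z"
            using gam unfolding timelike_curve_from_def fd_timelike_curve_def lipschitz_curve_def by auto
          obtain L where L: "\<forall>s\<in>{a0..b0}. \<forall>t\<in>{a0..b0}. d' (\<gamma> s) (\<gamma> t) \<le> L * \<bar>s - t\<bar>"
            using gam unfolding timelike_curve_from_def fd_timelike_curve_def lipschitz_curve_def by auto
          define h where "h = (\<lambda>t. d' y (\<gamma> t))"
          have "\<bar>L\<bar>-lipschitz_on {a0..b0} h"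
          proof (rule lipschitz_onI)
            fix s t assume st: "s \<in> {a0..b0}" "t \<in> {a0..b0}"
            have "\<gamma> s \<in> Y" "\<gamma> t \<in> Y" using gY' st by auto
            then have "\<bar>d' (\<gamma> s) y - d' y (\<gamma> t)\<bar> \<le> d' (\<gamma> s) (\<gamma> t)"
              using MY.mdist_reverse_triangle y by blast
            also have "\<dots> \<le> L * \<bar>s - t\<bar>" using L st by blast
            also have "\<dots> \<le> \<bar>L\<bar> * \<bar>s - t\<bar>" by (simp add: mult_right_mono)
            finally show "dist (h s) (h t) \<le> \<bar>L\<bar> * dist s t"
              by (simp add: h_def dist_real_def MY.commute)
          qed simp
          then have hc: "continuous_on {a0..b0} h" by (rule lipschitz_on_continuous_on)
          have ha: "h a0 < \<rho>" using ends gp by (simp add: h_def)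
          have hb: "\<rho> \<le> h b0" using ends zr by (simp add: h_def)
          obtain t where t: "a0 \<le> t" "t \<le> b0" "h t = \<rho>"
            using IVT'[of h a0 \<rho> b0, OF _ hb _ hc] ha ab by auto
          have ta: "a0 < t" using t ha by (metis order_le_imp_less_or_eq order_less_irrefl)
          define w where "w = \<gamma> t"
          have wY: "w \<in> Y" using gY' t unfolding w_def by auto
          have pw: "ll' p w" using ord ta t ends ab unfolding w_def by auto
          have wq: "ll' w q"
          proof (cases "t = b0")
            case True then show ?thesis using z ends unfolding w_def by simp
          next
            case False
            then have "ll' w z" using ord ta t ends ab unfolding w_def by auto
            then show ?thesis using trY[OF wY z(1) q(1)] z(3) by blast
          qed
          have wS: "w \<in> S" using wY y t(3) unfolding S_def h_def w_def by auto
          have gw: "g w \<in> X" "f (g w) = w" using gY[OF wY] by auto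
          have "ll (g p) (g w)" using llf[of "g p" "g w"] gY[OF p(1)] gw pw by auto
          moreover have "ll (g w) (g q)" using llf[of "g w" "g q"] gY[OF q(1)] gw wq by auto
          ultimately have "g w \<in> U" using W(5) gp(1) gq(1) gw(1) by blast
          moreover have "g w \<in> g ` S" using wS by auto
          ultimately show False unfolding U_def by auto
        qed
        then show "z \<in> V" using z(1) y r1(2) \<rho>(2) by auto
      qed
      show "\<exists>T. openin (topology_generated_by SY) T \<and> y \<in> T \<and> T \<subseteq> V"
        using Dop yD DV by blast
    qed
    then show ?thesis by (simp add: openin_topology_generated_by_iff)
  qed
  have eqY: "generate_topology_on SY V \<longleftrightarrow> openin MY.mtopology V" for V
    using TYsub AYsub by blast
  have sc: "strongly_causal Y d' ll'"
    unfolding strongly_causal_def alexandrov_topology_def topology_eq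
    using eqY unfolding SY_def by (simp add: openin_topology_generated_by_iff)
  have hm: "homeomorphic_map MX.mtopology MY.mtopology f"
  proof (rule bijective_open_imp_homeomorphic_map)
    show "continuous_map MX.mtopology MY.mtopology f"
      unfolding continuous_map_def
    proof (intro conjI allI impI)
      show "f \<in> topspace MX.mtopology \<rightarrow> topspace MY.mtopology" using fY by auto
    next
      fix V assume "openin MY.mtopology V"
      then have "generate_topology_on SX (f -` V \<inter> X)" using preY TYsub by blast
      moreover have "{x \<in> topspace MX.mtopology. f x \<in> V} = f -` V \<inter> X" by auto
      ultimately show "openin MX.mtopology {x \<in> topspace MX.mtopology. f x \<in> V}" using genX by simp
    qed
    show "open_map MX.mtopology MY.mtopology f"
      unfolding open_map_def using genX imgX AYsub by blast
    show "f ` topspace MX.mtopology = topspace MY.mtopology" using assms(5) by simp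
    show "inj_on f (topspace MX.mtopology)" using inj by simp
  qed
  show ?thesis using hm sc by blast
qed

end
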